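(* Let $f:\mathbb N\to\mathbb R$ be defined by $f(0)=0$ and $f(n)=f(n-1)+1+\frac1n\sum_{i=0}^{n-1}f(i)$ for $n>0$. Then for every $n\ge 0$, $$f(n)=\sum_{k=1}^{n}\frac{1}{k!}\binom{n}{k}.$$ *)

theory Defs
  imports Complex_Main
begin

end

theory Submission
  imports Defs
begin

definition G :: "nat \<Rightarrow> nat \<Rightarrow> real" where
  "G m n = (\<Sum>k\<le>m. real (n choose k) / fact k)"

lemma hockey: "(\<Sum>i<n. (i choose k)) = n choose Suc k"
  by (induction n) auto

lemma G_ext: "n \<le> m \<Longrightarrow> G m n = G n n"
  unfolding G_def
  by (rule sum.mono_neutral_right) auto

lemma G_target: "G n n = 1 + (\<Sum>k=1..n. (1 / fact k) * real (n choose k))"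
proof -
  have "G n n = (\<Sum>k=0..n. real (n choose k) / fact k)"
    unfolding G_def by (simp add: atMost_atLeast0)
  also have "\<dots> = 1 + (\<Sum>k=Suc 0..n. real (n choose k) / fact k)"
    by (subst sum.atLeast_Suc_atMost) auto
  finally show ?thesis by simp
qed

lemma lemA: "(\<Sum>i<n. G m i) = (\<Sum>k\<le>m. real (n choose Suc k) / fact k)"
proof -
  have "(\<Sum>i<n. G m i) = (\<Sum>k\<le>m. (\<Sum>i<n. real (i choose k)) / fact k)"
    unfolding G_def by (subst sum.swap) (simp add: sum_divide_distrib)
  also have "\<dots> = (\<Sum>k\<le>m. real (n choose Suc k) / fact k)"
    by (rule sum.cong) (simp_all flip: of_nat_sum add: hockey)
  finally show ?thesis .
qed

lemma lemB: "real (Suc p) * (G (Suc m) (Suc p) - G (Suc m) p)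
   = (\<Sum>j\<le>m. real (Suc p choose Suc j) / fact j)"
proof -
  have "G (Suc m) (Suc p) - G (Suc m) p = (\<Sum>j\<le>m. real (p choose j) / fact (Suc j))"
    unfolding G_def
    by (simp add: sum.atMost_Suc_shift del: sum.atMost_Suc flip: sum_subtractf add: field_simps,
        rule sum.cong, simp, simp add: add_divide_distrib)
  then have "real (Suc p) * (G (Suc m) (Suc p) - G (Suc m) p)
     = (\<Sum>j\<le>m. real (Suc p) * real (p choose j) / fact (Suc j))"
    by (simp add: sum_distrib_left)
  also have "\<dots> = (\<Sum>j\<le>m. real (Suc p choose Suc j) / fact j)"
  proof (rule sum.cong)
    fix j
    have e: "real (Suc p) * real (p choose j) = real (Suc j) * real (Suc p choose Suc j)"
      by (metis Suc_times_binomial of_nat_mult)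
    show "real (Suc p) * real (p choose j) / fact (Suc j) = real (Suc p choose Suc j) / fact j"
      unfolding e by (simp add: fact_Suc field_simps del: of_nat_Suc)
  qed simp
  finally show ?thesis .
qed

theorem mainTheorem4:
  fixes f :: "nat \<Rightarrow> real"
  assumes f0: "f 0 = 0"
    and fSuc: "\<And>n. n > 0 \<Longrightarrow> f n = f (n - 1) + 1 + (1 / real n) * (\<Sum>i<n. f i)"
  shows "\<forall>n. f n = (\<Sum>k=1..n. (1 / fact k) * real (n choose k))"
proof -
  have main: "f n = G n n - 1" for n
  proof (induction n rule: less_induct)
    case (less n)
    show ?case
    proof (cases n)
      case 0
      then show ?thesis using f0 by (simp add: G_def)
    next
      case (Suc p)
      have IH: "f i = G n i - 1" if "i < n" for i
        using less that G_ext[of i n] by simp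
      have s: "(\<Sum>i<n. f i) = (\<Sum>i<n. G n i) - real n"
        using IH by (simp add: sum_subtractf)
      have A: "(\<Sum>i<n. G n i) = (\<Sum>k\<le>p. real (n choose Suc k) / fact k)"
        unfolding lemA Suc by (simp del: binomial_Suc_Suc)
      have B: "real n * (G n n - G n p) = (\<Sum>k\<le>p. real (n choose Suc k) / fact k)"
        using lemB[of p p] Suc by simp
      have fn: "f n = G n p - 1 + 1 + (1 / real n) * ((\<Sum>i<n. G n i) - real n)"
        using fSuc[of n] Suc IH[of p] s by simp
      have "real n > 0" using Suc by simp
      then show ?thesis unfolding fn A B[symmetric] by (simp add: field_simps)
    qed
  qed
  show ?thesis using main G_target by simp
qed

end
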